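(* Let $1<q\le2$ and $n/q'<s<n/q'+1$. Let $\psi^{(1)},\psi^{(2)}\in C_c^\infty(\mathbb{R}^n)$ with $\operatorname{supp}\psi^{(j)}\subset\{x:|x|\le R\}$ for some $R>0$ ($j=1,2$), and set $\psi=\psi^{(1)}*\psi^{(2)}$. Then there is a constant $C_\psi>0$ such that for all $\vartheta\in\mathbb{R}^n$, $$\big\|\langle\cdot\rangle^s\big(\hat\psi(\cdot-\vartheta)-\hat\psi(\cdot)\big)\big\|_{L^q(\mathbb{R}^n)}\le C_\psi\Big(|\vartheta|^{s-\frac{n}{q'}}\Big(\max_{t\in\mathbb{R}^n,|t|\le R}|e^{i\vartheta\cdot t}-1|\Big)^{1-(s-\frac{n}{q'})}+|\vartheta|^s\Big).$$
   Context: $q'$ is the conjugate exponent of $q$; $\langle\xi\rangle=(1+|\xi|^2)^{1/2}$; $\hat f(\xi)=\int f(x)e^{-ix\cdot\xi}dx$; $(f*g)(x)=\int f(x-y)g(y)dy$. *)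

theory Defs
  imports "HOL-Analysis.Analysis"
begin

inductive_set iter_partials :: "('a::euclidean_space \<Rightarrow> 'b::real_normed_vector) \<Rightarrow> ('a \<Rightarrow> 'b) set"
  for f where
  base: "f \<in> iter_partials f"
| step: "g \<in> iter_partials f \<Longrightarrow> b \<in> Basis \<Longrightarrow>
          (\<lambda>x. frechet_derivative g (at x) b) \<in> iter_partials f"

definition smooth_fun :: "('a::euclidean_space \<Rightarrow> 'b::real_normed_vector) \<Rightarrow> bool" where
  "smooth_fun f \<longleftrightarrow> (\<forall>g\<in>iter_partials f. \<forall>x. g differentiable (at x))"

definition fourier :: "('a::euclidean_space \<Rightarrow> complex) \<Rightarrow> 'a \<Rightarrow> complex" where
  "fourier f \<xi> = (LINT x|lborel. f x * cis (- (x \<bullet> \<xi>)))"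

definition conv :: "('a::euclidean_space \<Rightarrow> complex) \<Rightarrow> ('a \<Rightarrow> complex) \<Rightarrow> 'a \<Rightarrow> complex" where
  "conv f g x = (LINT y|lborel. f (x - y) * g y)"

definition jbr :: "'a::real_normed_vector \<Rightarrow> real" where
  "jbr \<xi> = sqrt (1 + (norm \<xi>)\<^sup>2)"

definition Lq_norm :: "real \<Rightarrow> ('a::euclidean_space \<Rightarrow> 'b::real_normed_vector) \<Rightarrow> ennreal" where
  "Lq_norm q f = (let I = (\<integral>\<^sup>+ x. ennreal (norm (f x) powr q) \<partial>lborel)
                  in if I = \<infinity> then \<infinity> else ennreal (enn2real I powr (1 / q)))"

end

theory Submission
  imports Defs
begin

lemma lborel_translate_distr: "distr lborel borel ((+) (a::'a::euclidean_space)) = lborel"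
proof -
  have "lborel = density (distr lborel borel (\<lambda>x. a + (1::real) *\<^sub>R x)) (\<lambda>_. \<bar>1::real\<bar>^DIM('a))"
    by (rule lborel_affine) simp
  then have "lborel = distr lborel borel ((+) a)" by (simp add: density_1)
  then show ?thesis by simp
qed

lemma integral_translate:
  fixes f :: "'a::euclidean_space \<Rightarrow> 'b::{banach,second_countable_topology}"
  assumes [measurable]: "f \<in> borel_measurable borel"
  shows "(\<integral>x. f (a + x) \<partial>lborel) = (\<integral>x. f x \<partial>lborel)"
proof -
  have "(\<integral>x. f x \<partial>lborel) = (\<integral>x. f x \<partial>distr lborel borel ((+) a))"
    by (simp add: lborel_translate_distr)
  also have "\<dots> = (\<integral>x. f (a + x) \<partial>lborel)"
    by (subst integral_distr) auto
  finally show ?thesis by simp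
qed

lemma nn_integral_translate:
  fixes f :: "'a::euclidean_space \<Rightarrow> ennreal"
  assumes [measurable]: "f \<in> borel_measurable borel"
  shows "(\<integral>\<^sup>+x. f (a + x) \<partial>lborel) = (\<integral>\<^sup>+x. f x \<partial>lborel)"
proof -
  have "(\<integral>\<^sup>+x. f x \<partial>lborel) = (\<integral>\<^sup>+x. f x \<partial>distr lborel borel ((+) a))"
    by (simp add: lborel_translate_distr)
  also have "\<dots> = (\<integral>\<^sup>+x. f (a + x) \<partial>lborel)"
    by (subst nn_integral_distr) auto
  finally show ?thesis by simp
qed

lemma cmod_cis_minus_one_eq: "cmod (cis a - 1) = 2 * \<bar>sin (a/2)\<bar>"
proof -
  have "(cmod (cis a - 1))\<^sup>2 = (cos a - 1)\<^sup>2 + (sin a)\<^sup>2"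
    by (simp add: cmod_power2)
  also have "\<dots> = 2 - 2 * cos a" using sin_cos_squared_add[of a]
    by (simp add: power2_eq_square algebra_simps)
  also have "cos a = 1 - 2 * sin (a/2) ^ 2" using cos_double_sin[of "a/2"] by simp
  finally have "(cmod (cis a - 1))\<^sup>2 = (2 * \<bar>sin (a/2)\<bar>)\<^sup>2"
    by (simp add: power2_eq_square algebra_simps)
  then show ?thesis
    by (subst (asm) power2_eq_iff_nonneg) auto
qed

lemma cmod_cis_minus_one: "cmod (cis a - 1) \<le> \<bar>a\<bar>"
  using abs_sin_x_le_abs_x[of "a/2"] by (simp add: cmod_cis_minus_one_eq)

lemma sin_ge_half: assumes "0 \<le> x" "x \<le> (1::real)" shows "x / 2 \<le> sin x"
proof -
  let ?f = "\<lambda>x. sin x - x / 2"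
  have cosb: "cos u \<ge> 1/2" if "0 \<le> u" "u \<le> 1" for u::real
  proof -
    have "\<bar>sin (u/2)\<bar> \<le> u/2" using abs_sin_x_le_abs_x[of "u/2"] that by simp
    then have "sin (u/2) ^ 2 \<le> (u/2)^2"
      using power_mono[of "\<bar>sin (u/2)\<bar>" "u/2" 2] by simp
    moreover have "(u/2)^2 \<le> 1/4" using that by (simp add: power2_eq_square mult_le_one)
    ultimately have "sin (u/2) ^ 2 \<le> 1/4" by linarith
    moreover have "cos u = 1 - 2 * sin (u/2) ^ 2" using cos_double_sin[of "u/2"] by simp
    ultimately show ?thesis by linarith
  qed
  have "\<And>u. \<lbrakk>0 \<le> u; u \<le> x\<rbrakk> \<Longrightarrow> (?f has_real_derivative cos u - 1/2) (at u)"
    by (auto intro!: derivative_eq_intros)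
  have "?f x \<ge> ?f 0"
  proof (rule DERIV_nonneg_imp_nondecreasing[OF assms(1)])
    fix u assume u: "0 \<le> u" "u \<le> x"
    show "\<exists>y. (?f has_real_derivative y) (at u) \<and> 0 \<le> y"
      using cosb[of u] u assms by (intro exI[of _ "cos u - 1/2"]) (auto intro!: derivative_eq_intros)
  qed
  then show ?thesis by simp
qed

lemma cmod_cis_minus_one_lower:
  assumes "\<bar>a\<bar> \<le> 1" shows "\<bar>a\<bar> / 2 \<le> cmod (cis a - 1)"
proof -
  have "\<bar>a\<bar>/2/2 \<le> sin (\<bar>a\<bar>/2)" using assms by (intro sin_ge_half) auto
  also have "sin (\<bar>a\<bar>/2) = \<bar>sin (a/2)\<bar>"
  proof (cases "a \<ge> 0")
    case True
    then show ?thesis using assms sin_ge_zero[of "a/2"] pi_gt3 by simp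
  next
    case False
    then have "sin (-a/2) \<ge> 0" using assms sin_ge_zero[of "-a/2"] pi_gt3 by simp
    then show ?thesis using False by simp
  qed
  finally show ?thesis by (simp add: cmod_cis_minus_one_eq)
qed

lemma int_cs:
  fixes h :: "'a::euclidean_space \<Rightarrow> 'b::{banach,second_countable_topology}"
  assumes "continuous_on UNIV h" "\<And>x. norm x > r \<Longrightarrow> h x = 0"
  shows "integrable lborel h"
proof -
  have "integrable lborel (\<lambda>x. indicator (cball 0 r) x *\<^sub>R h x)"
    by (rule borel_integrable_compact) (auto intro: continuous_on_subset[OF assms(1)])
  moreover have "(\<lambda>x. indicator (cball 0 r) x *\<^sub>R h x) = h"
    using assms(2) by (auto simp: indicator_def fun_eq_iff not_le)
  ultimately show ?thesis by simp
qed

lemma bdd_cs: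
  fixes h :: "'a::euclidean_space \<Rightarrow> 'b::real_normed_vector"
  assumes "continuous_on UNIV h" "\<And>x. norm x > r \<Longrightarrow> h x = 0"
  obtains M where "M \<ge> 0" "\<And>x. norm (h x) \<le> M"
proof -
  have "compact (h ` cball 0 r)"
    by (rule compact_continuous_image) (auto intro: continuous_on_subset[OF assms(1)])
  then obtain M where M: "\<And>y. y \<in> h ` cball 0 r \<Longrightarrow> norm y \<le> M"
    using compact_imp_bounded bounded_iff by metis
  show ?thesis
  proof (rule that[of "max M 0"])
    fix x show "norm (h x) \<le> max M 0"
      using M[of "h x"] assms(2)[of x] by (cases "norm x \<le> r") auto
  qed simp
qed

lemma seq_at0:
  fixes v :: "'a::real_normed_vector"
  assumes "v \<noteq> 0"
  shows "filterlim (\<lambda>k. inverse (real (Suc k)) *\<^sub>R v) (at 0) sequentially"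
  unfolding filterlim_at
proof
  show "\<forall>\<^sub>F k in sequentially. inverse (real (Suc k)) *\<^sub>R v \<in> UNIV \<and> inverse (real (Suc k)) *\<^sub>R v \<noteq> 0"
    using assms by simp
  show "(\<lambda>k. inverse (real (Suc k)) *\<^sub>R v) \<longlonglongrightarrow> 0"
    using tendsto_scaleR[OF LIMSEQ_inverse_real_of_nat tendsto_const[of v]] by simp
qed

lemma cis_deriv_lim:
  "(\<lambda>k. complex_of_real (real (Suc k)) * (cis (inverse (real (Suc k)) * c) - 1)) \<longlonglongrightarrow> \<i> * c"
proof -
  have d: "((\<lambda>z. exp (\<i> * c * z)) has_field_derivative \<i> * c) (at 0)"
    by (auto intro!: derivative_eq_intros)
  then have "((\<lambda>z. (exp (\<i> * c * z) - exp (\<i> * c * 0)) / (z - 0)) \<longlongrightarrow> \<i> * c) (at 0)"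
    using DERIV_def[of "\<lambda>z. exp (\<i> * c * z)" 0 "\<i> * c"]
    by (simp add: has_field_derivative_iff)
  from filterlim_compose[OF this seq_at0[of "1::complex"]]
  show ?thesis
    by (simp add: cis_conv_exp divide_inverse mult.commute mult.left_commute scaleR_conv_of_real mult.assoc)
qed

lemma cmod_one_plus_nat [simp]: "cmod (1 + complex_of_nat k) = 1 + real k"
  using norm_of_nat[of "Suc k", where 'a=complex] by simp

lemma one_plus_nat_neq0 [simp]: "1 + complex_of_nat k \<noteq> 0"
  using of_nat_neq_0[of k, where 'a=complex] by simp

lemma fourier_pd:
  fixes g :: "real^'n \<Rightarrow> complex" and b \<xi> :: "real^'n"
  assumes diff: "\<And>x. g differentiable (at x)"
    and contG: "continuous_on UNIV (\<lambda>x. frechet_derivative g (at x) b)"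
    and zg: "\<And>x. norm x > R \<Longrightarrow> g x = 0"
    and zG: "\<And>x. norm x > R \<Longrightarrow> frechet_derivative g (at x) b = 0"
    and nb: "norm b = 1"
  shows "fourier (\<lambda>x. frechet_derivative g (at x) b) \<xi> = \<i> * of_real (b \<bullet> \<xi>) * fourier g \<xi>"
proof -
  define G where "G x = frechet_derivative g (at x) b" for x
  define e where "e x = cis (- (x \<bullet> \<xi>))" for x
  define \<tau> where "\<tau> k = inverse (real (Suc k))" for k
  define s where "s k x = of_real (real (Suc k)) * (g (x + \<tau> k *\<^sub>R b) - g x) * e x" for k x
  define c where "c = b \<bullet> \<xi>"
  have b0: "b \<noteq> 0" using nb by auto
  have contg: "continuous_on UNIV g"
    using diff differentiable_imp_continuous_within continuous_at_imp_continuous_on by blast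
  have conte: "continuous_on UNIV e" unfolding e_def by (auto intro!: continuous_intros)
  have contgs: "continuous_on UNIV (\<lambda>x. g (x + a *\<^sub>R b))" for a
    by (rule continuous_on_compose2[OF contg]) (auto intro!: continuous_intros)
  have conts: "continuous_on UNIV (s k)" for k
    unfolding s_def by (intro continuous_intros contgs contg conte)
  obtain M where M0: "M \<ge> 0" and M: "\<And>x. norm (G x) \<le> M"
    using bdd_cs[OF contG[folded G_def] zG[folded G_def]] by metis
  have hd: "(g has_derivative frechet_derivative g (at x)) (at x)" for x
    using diff frechet_derivative_works by blast
  have lin: "frechet_derivative g (at x) (a *\<^sub>R v) = a *\<^sub>R frechet_derivative g (at x) v" for x a v
    using has_derivative_bounded_linear[OF hd[of x]] by (simp add: bounded_linear.linear linear_cmul)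
  have tau_pos: "\<tau> k > 0" and tau_le: "\<tau> k \<le> 1" for k
    unfolding \<tau>_def by (auto simp: field_simps)
  have lim: "(\<lambda>k. s k x) \<longlonglongrightarrow> G x * e x" for x
  proof -
    let ?D = "frechet_derivative g (at x)"
    have "(\<lambda>h. norm (g (x + h) - g x - ?D h) / norm h) \<midarrow>0\<rightarrow> 0"
      using hd[of x] by (simp add: has_derivative_at)
    from filterlim_compose[OF this seq_at0[OF b0]]
    have "(\<lambda>k. norm (g (x + \<tau> k *\<^sub>R b) - g x - ?D (\<tau> k *\<^sub>R b)) / norm (\<tau> k *\<^sub>R b)) \<longlonglongrightarrow> 0"
      by (simp add: \<tau>_def o_def)
    moreover have "norm (g (x + \<tau> k *\<^sub>R b) - g x - ?D (\<tau> k *\<^sub>R b)) / norm (\<tau> k *\<^sub>R b)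
        = norm (of_real (real (Suc k)) * (g (x + \<tau> k *\<^sub>R b) - g x) - G x)" for k
    proof -
      have "norm (g (x + \<tau> k *\<^sub>R b) - g x - ?D (\<tau> k *\<^sub>R b)) / norm (\<tau> k *\<^sub>R b)
          = norm (g (x + \<tau> k *\<^sub>R b) - g x - of_real (\<tau> k) * G x) * real (Suc k)"
      proof -
        have "?D (\<tau> k *\<^sub>R b) = of_real (\<tau> k) * G x"
          unfolding lin G_def by (simp add: scaleR_conv_of_real)
        moreover have "norm (\<tau> k *\<^sub>R b) = \<tau> k" using tau_pos[of k] nb by simp
        ultimately show ?thesis using tau_pos[of k] by (simp add: \<tau>_def divide_inverse)
      qed
      also have "\<dots> = norm (of_real (real (Suc k)) * (g (x + \<tau> k *\<^sub>R b) - g x - of_real (\<tau> k) * G x))"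
        by (simp add: norm_mult)
      also have "of_real (real (Suc k)) * (g (x + \<tau> k *\<^sub>R b) - g x - of_real (\<tau> k) * G x)
          = of_real (real (Suc k)) * (g (x + \<tau> k *\<^sub>R b) - g x) - G x"
      proof -
        have e1: "complex_of_real (real (Suc k)) * complex_of_real (\<tau> k) = 1"
          by (simp add: \<tau>_def flip: of_real_mult)
        show ?thesis by (simp only: right_diff_distrib mult.assoc[symmetric] e1 mult_1)
      qed
      finally show ?thesis .
    qed
    ultimately have "(\<lambda>k. norm (of_real (real (Suc k)) * (g (x + \<tau> k *\<^sub>R b) - g x) - G x)) \<longlonglongrightarrow> 0"
      by simp
    then have "(\<lambda>k. of_real (real (Suc k)) * (g (x + \<tau> k *\<^sub>R b) - g x)) \<longlonglongrightarrow> G x"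
      by (simp add: tendsto_norm_zero_iff LIM_zero_iff)
    from tendsto_mult[OF this tendsto_const[of "e x"]]
    show ?thesis by (simp add: s_def)
  qed
  have dom: "norm (s k x) \<le> M * indicator (cball 0 (R + 1)) x" for k x
  proof (cases "norm x \<le> R + 1")
    case False
    have "norm (x + \<tau> k *\<^sub>R b) \<ge> norm x - \<tau> k"
      using norm_triangle_ineq2[of x "- (\<tau> k *\<^sub>R b)"] tau_pos[of k] nb by simp
    then have "g (x + \<tau> k *\<^sub>R b) = 0" "g x = 0" using False tau_le[of k] by (auto intro!: zg)
    then show ?thesis using M0 by (simp add: s_def)
  next
    case True
    let ?F = "\<lambda>t. g (x + t *\<^sub>R b)"
    have dF: "(?F has_derivative (\<lambda>h. frechet_derivative g (at (x + t *\<^sub>R b)) (h *\<^sub>R b))) (at t within {0..\<tau> k})" for t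
    proof (rule has_derivative_compose[where f="\<lambda>t. x + t *\<^sub>R b"])
      show "((\<lambda>t. x + t *\<^sub>R b) has_derivative (\<lambda>h. h *\<^sub>R b)) (at t within {0..\<tau> k})"
        by (auto intro!: derivative_eq_intros)
      show "(g has_derivative frechet_derivative g (at (x + t *\<^sub>R b))) (at (x + t *\<^sub>R b))"
        by (rule hd)
    qed
    have "norm (?F (\<tau> k) - ?F 0) \<le> M * norm (\<tau> k - 0)"
    proof (rule differentiable_bound[OF convex_real_interval(5) dF])
      fix t
      show "onorm (\<lambda>h. frechet_derivative g (at (x + t *\<^sub>R b)) (h *\<^sub>R b)) \<le> M"
      proof (rule onorm_le)
        fix h :: real
        show "norm (frechet_derivative g (at (x + t *\<^sub>R b)) (h *\<^sub>R b)) \<le> M * norm h"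
          using M[of "x + t *\<^sub>R b"] mult_left_mono[of _ M "\<bar>h\<bar>"]
          by (simp add: lin G_def mult.commute[of "\<bar>h\<bar>"])
      qed
    qed (use tau_pos[of k] in auto)
    then have "norm (g (x + \<tau> k *\<^sub>R b) - g x) \<le> M * \<tau> k" using tau_pos[of k] by simp
    then have "real (Suc k) * norm (g (x + \<tau> k *\<^sub>R b) - g x) \<le> real (Suc k) * (M * \<tau> k)"
      by (intro mult_left_mono) auto
    also have "real (Suc k) * (M * \<tau> k) = M" by (simp add: \<tau>_def)
    finally show ?thesis using True by (simp add: s_def norm_mult e_def)
  qed
  have intge: "integrable lborel (\<lambda>x. g x * e x)"
    by (rule int_cs[where r=R]) (auto intro!: continuous_intros contg conte simp: zg)
  have ints: "integrable lborel (\<lambda>x. g (x + a *\<^sub>R b) * e x)" if "0 \<le> a" "a \<le> 1" for a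
  proof (rule int_cs[where r="R+1"])
    show "continuous_on UNIV (\<lambda>x. g (x + a *\<^sub>R b) * e x)" by (intro continuous_intros contgs conte)
    fix x :: "real^'n" assume "R + 1 < norm x"
    moreover have "norm (x + a *\<^sub>R b) \<ge> norm x - a"
      using norm_triangle_ineq2[of x "- (a *\<^sub>R b)"] that nb by simp
    ultimately show "g (x + a *\<^sub>R b) * e x = 0" using that by (simp add: zg)
  qed
  have shift: "(\<integral>x. g (x + a *\<^sub>R b) * e x \<partial>lborel) = cis (a * c) * fourier g \<xi>" for a
  proof -
    have meas: "(\<lambda>y. g y * e (y - a *\<^sub>R b)) \<in> borel_measurable borel"
      by (intro borel_measurable_continuous_onI continuous_intros contg continuous_on_compose2[OF conte]) auto
    have "(\<integral>x. g (x + a *\<^sub>R b) * e x \<partial>lborel) = (\<integral>x. (\<lambda>y. g y * e (y - a *\<^sub>R b)) (a *\<^sub>R b + x) \<partial>lborel)"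
      by (simp add: add.commute)
    also have "\<dots> = (\<integral>y. g y * e (y - a *\<^sub>R b) \<partial>lborel)"
      by (rule integral_translate[OF meas])
    also have "\<dots> = (\<integral>y. cis (a * c) * (g y * e y) \<partial>lborel)"
    proof (rule Bochner_Integration.integral_cong[OF refl])
      fix y
      have "e (y - a *\<^sub>R b) = cis (a * c) * e y"
        by (simp add: e_def c_def inner_diff_left cis_mult algebra_simps)
      then show "g y * e (y - a *\<^sub>R b) = cis (a * c) * (g y * e y)" by simp
    qed
    also have "\<dots> = cis (a * c) * fourier g \<xi>"
      by (simp add: fourier_def e_def)
    finally show ?thesis .
  qed
  have ints_eq: "(\<integral>x. s k x \<partial>lborel) = of_real (real (Suc k)) * (cis (\<tau> k * c) - 1) * fourier g \<xi>" for k
  proof -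
    have "(\<integral>x. s k x \<partial>lborel) = of_real (real (Suc k)) *
        ((\<integral>x. g (x + \<tau> k *\<^sub>R b) * e x \<partial>lborel) - (\<integral>x. g x * e x \<partial>lborel))"
      unfolding s_def using ints[OF less_imp_le[OF tau_pos[of k]] tau_le[of k]] intge
      by (simp add: algebra_simps)
    also have "\<dots> = of_real (real (Suc k)) * (cis (\<tau> k * c) - 1) * fourier g \<xi>"
      by (simp only: shift) (simp add: fourier_def e_def algebra_simps)
    finally show ?thesis .
  qed
  have "(\<lambda>k. \<integral>x. s k x \<partial>lborel) \<longlonglongrightarrow> (\<integral>x. G x * e x \<partial>lborel)"
  proof (rule integral_dominated_convergence[where w="\<lambda>x::real^'n. M * indicator (cball 0 (R + 1)) x"])
    show "(\<lambda>x. G x * e x) \<in> borel_measurable lborel"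
      by (simp, intro borel_measurable_continuous_onI continuous_intros contG[folded G_def] conte)
    show "s k \<in> borel_measurable lborel" for k
      by (simp, intro borel_measurable_continuous_onI conts)
    show "integrable lborel (\<lambda>x::real^'n. M * indicator (cball 0 (R + 1)) x)"
    proof (rule integrable_mult_right, rule integrable_real_indicator)
      show "emeasure lborel (cball (0::real^'n) (R + 1)) < \<infinity>"
        by (rule emeasure_lborel_cball_finite)
    qed simp
  qed (use lim dom in auto)
  moreover have "(\<lambda>k. \<integral>x. s k x \<partial>lborel) \<longlonglongrightarrow> \<i> * of_real c * fourier g \<xi>"
    unfolding ints_eq \<tau>_def using tendsto_mult[OF cis_deriv_lim[of c] tendsto_const[of "fourier g \<xi>"]]
    by (simp add: mult.assoc)
  ultimately have "(\<integral>x. G x * e x \<partial>lborel) = \<i> * of_real c * fourier g \<xi>"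
    by (rule LIMSEQ_unique)
  then show ?thesis by (simp add: fourier_def G_def e_def c_def)
qed

definition pdk :: "real^'n \<Rightarrow> nat \<Rightarrow> (real^'n \<Rightarrow> complex) \<Rightarrow> (real^'n \<Rightarrow> complex)" where
  "pdk b k g = ((\<lambda>h x. frechet_derivative h (at x) b) ^^ k) g"

lemma pdk_0[simp]: "pdk b 0 g = g" by (simp add: pdk_def)
lemma pdk_Suc: "pdk b (Suc k) g = (\<lambda>x. frechet_derivative (pdk b k g) (at x) b)"
  by (simp add: pdk_def)

lemma fourier_norm_le: "norm (fourier g \<xi>) \<le> (\<integral>x. norm (g x) \<partial>lborel)"
proof -
  have "norm (fourier g \<xi>) \<le> (\<integral>x. norm (g x * cis (- (x \<bullet> \<xi>))) \<partial>lborel)"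
    unfolding fourier_def by (rule integral_norm_bound)
  also have "\<dots> = (\<integral>x. norm (g x) \<partial>lborel)" by (simp add: norm_mult)
  finally show ?thesis .
qed

lemma sum_pow_le:
  fixes y :: "'i \<Rightarrow> real"
  assumes I: "finite I" and nn: "\<And>i. i \<in> I \<Longrightarrow> y i \<ge> 0"
  shows "(1 + sum y I) ^ m \<le> (real (card I) + 1) ^ m * (1 + (\<Sum>i\<in>I. y i ^ m))"
proof -
  define Y where "Y = Max (insert 1 (y ` I))"
  have Y1: "1 \<le> Y" unfolding Y_def using I by (auto intro: Max_ge)
  have Yi: "y i \<le> Y" if "i \<in> I" for i unfolding Y_def using I that by (auto intro: Max_ge)
  have "sum y I \<le> real (card I) * Y"
    using sum_bounded_above[of I y Y] Yi by simp
  then have "1 + sum y I \<le> (real (card I) + 1) * Y" using Y1 by (simp add: algebra_simps)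
  then have "(1 + sum y I) ^ m \<le> ((real (card I) + 1) * Y) ^ m"
    using nn sum_nonneg[of I y] by (intro power_mono) auto
  also have "\<dots> = (real (card I) + 1) ^ m * Y ^ m" by (simp add: power_mult_distrib)
  also have "Y ^ m \<le> 1 + (\<Sum>i\<in>I. y i ^ m)"
  proof -
    have "Y \<in> insert 1 (y ` I)" unfolding Y_def using I by (intro Max_in) auto
    then show ?thesis
    proof
      assume "Y = 1" then show ?thesis using nn by (simp add: sum_nonneg)
    next
      assume "Y \<in> y ` I"
      then obtain i where i: "i \<in> I" "Y = y i" by auto
      have "y i ^ m \<le> (\<Sum>i\<in>I. y i ^ m)"
        using I i nn by (intro member_le_sum) auto
      then show ?thesis using i by simp
    qed
  qed
  then have "(real (card I) + 1) ^ m * Y ^ m \<le> (real (card I) + 1) ^ m * (1 + (\<Sum>i\<in>I. y i ^ m))"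
    by (intro mult_left_mono) auto
  finally show ?thesis .
qed

lemma norm_sq_sum: "(norm (\<xi>::'a::euclidean_space))\<^sup>2 = (\<Sum>b\<in>Basis. (\<xi> \<bullet> b)\<^sup>2)"
  unfolding power2_norm_eq_inner by (subst euclidean_inner) (simp add: power2_eq_square)

context
  fixes f :: "real^'n \<Rightarrow> complex" and R :: real
  assumes sm: "smooth_fun f" and supp: "\<And>x. norm x > R \<Longrightarrow> f x = 0"
begin

lemma ip_diff: "g \<in> iter_partials f \<Longrightarrow> g differentiable (at x)"
  using sm unfolding smooth_fun_def by blast

lemma ip_cont: "g \<in> iter_partials f \<Longrightarrow> continuous_on UNIV g"
  using ip_diff differentiable_imp_continuous_within continuous_at_imp_continuous_on by blast

lemma ip_supp: "g \<in> iter_partials f \<Longrightarrow> norm x > R \<Longrightarrow> g x = 0"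
proof (induction arbitrary: x rule: iter_partials.induct)
  case base then show ?case using supp by blast
next
  case (step g b)
  have "((\<lambda>_. 0::complex) has_derivative (\<lambda>_. 0)) (at x)" by simp
  then have "(g has_derivative (\<lambda>_. 0)) (at x)"
    by (rule has_derivative_transform_within_open[where s="{y. norm y > R}"])
       (use step in \<open>auto intro: open_Collect_less continuous_intros\<close>)
  then have "frechet_derivative g (at x) = (\<lambda>_. 0)" by (metis frechet_derivative_at)
  then show ?case by simp
qed

lemma pdk_mem: "g \<in> iter_partials f \<Longrightarrow> b \<in> Basis \<Longrightarrow> pdk b k g \<in> iter_partials f"
  by (induction k) (auto simp: pdk_Suc intro: iter_partials.step)

lemma fourier_pdk:
  assumes "b \<in> Basis"
  shows "fourier (pdk b k f) \<xi> = (\<i> * of_real (b \<bullet> \<xi>)) ^ k * fourier f \<xi>"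
proof (induction k)
  case 0 then show ?case by simp
next
  case (Suc k)
  have m: "pdk b k f \<in> iter_partials f" "pdk b (Suc k) f \<in> iter_partials f"
    using pdk_mem[OF iter_partials.base assms] by auto
  have "fourier (pdk b (Suc k) f) \<xi> = \<i> * of_real (b \<bullet> \<xi>) * fourier (pdk b k f) \<xi>"
    unfolding pdk_Suc
  proof (rule fourier_pd[where R=R])
    show "pdk b k f differentiable (at x)" for x using m ip_diff by blast
    show "continuous_on UNIV (\<lambda>x. frechet_derivative (pdk b k f) (at x) b)"
      using ip_cont[OF m(2)] by (simp add: pdk_Suc)
    show "pdk b k f x = 0" if "norm x > R" for x using ip_supp[OF m(1) that] .
    show "frechet_derivative (pdk b k f) (at x) b = 0" if "norm x > R" for x
      using ip_supp[OF m(2) that] by (simp add: pdk_Suc)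
  qed (use assms in simp)
  then show ?case using Suc by simp
qed

lemma comp_decay:
  assumes "b \<in> Basis"
  shows "\<bar>b \<bullet> \<xi>\<bar> ^ k * norm (fourier f \<xi>) \<le> (\<integral>x. norm (pdk b k f x) \<partial>lborel)"
proof -
  have "\<bar>b \<bullet> \<xi>\<bar> ^ k * norm (fourier f \<xi>) = norm (fourier (pdk b k f) \<xi>)"
    using fourier_pdk[OF assms] by (simp add: norm_mult norm_power)
  also have "\<dots> \<le> (\<integral>x. norm (pdk b k f x) \<partial>lborel)" by (rule fourier_norm_le)
  finally show ?thesis .
qed

lemma fourier_decay:
  obtains A where "A \<ge> 0" "\<And>\<xi>. (1 + (norm \<xi>)\<^sup>2) ^ m * norm (fourier f \<xi>) \<le> A"
proof -
  define A0 where "A0 = (\<integral>x. norm (f x) \<partial>lborel)"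
  define Ab where "Ab b = (\<integral>x. norm (pdk b (2*m) f x) \<partial>lborel)" for b
  define K where "K = (real (card (Basis::(real^'n) set)) + 1) ^ m"
  define A where "A = K * (A0 + (\<Sum>b\<in>(Basis::(real^'n) set). Ab b))"
  have A0: "A0 \<ge> 0" unfolding A0_def by simp
  have Ab: "Ab b \<ge> 0" for b unfolding Ab_def by simp
  have K: "K \<ge> 0" unfolding K_def by simp
  show ?thesis
  proof (rule that[of A])
    show "A \<ge> 0" unfolding A_def using A0 Ab K by (simp add: sum_nonneg)
    fix \<xi> :: "real^'n"
    let ?F = "norm (fourier f \<xi>)"
    have "(1 + (norm \<xi>)\<^sup>2) ^ m \<le> K * (1 + (\<Sum>b\<in>Basis. ((\<xi> \<bullet> b)\<^sup>2) ^ m))"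
      unfolding norm_sq_sum K_def by (rule sum_pow_le) auto
    then have "(1 + (norm \<xi>)\<^sup>2) ^ m * ?F \<le> K * (1 + (\<Sum>b\<in>Basis. ((\<xi> \<bullet> b)\<^sup>2) ^ m)) * ?F"
      by (intro mult_right_mono) auto
    also have "\<dots> = K * (?F + (\<Sum>b\<in>Basis. \<bar>b \<bullet> \<xi>\<bar> ^ (2*m) * ?F))"
    proof -
      have "((\<xi> \<bullet> b)\<^sup>2) ^ m = \<bar>b \<bullet> \<xi>\<bar> ^ (2*m)" for b
        by (simp add: power_mult inner_commute)
      then show ?thesis by (simp add: algebra_simps sum_distrib_right sum_distrib_left)
    qed
    also have "\<dots> \<le> A"
      unfolding A_def
    proof (intro mult_left_mono add_mono sum_mono K)
      show "?F \<le> A0" unfolding A0_def by (rule fourier_norm_le)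
      show "\<bar>b \<bullet> \<xi>\<bar> ^ (2*m) * ?F \<le> Ab b" if "b \<in> Basis" for b
        unfolding Ab_def by (rule comp_decay[OF that])
    qed
    finally show "(1 + (norm \<xi>)\<^sup>2) ^ m * ?F \<le> A" .
  qed
qed

end

lemma conv_thm:
  fixes p1 p2 :: "real^'n \<Rightarrow> complex"
  assumes c1: "continuous_on UNIV p1" and c2: "continuous_on UNIV p2"
    and z1: "\<And>x. norm x > R \<Longrightarrow> p1 x = 0" and z2: "\<And>x. norm x > R \<Longrightarrow> p2 x = 0"
  shows "fourier (conv p1 p2) \<xi> = fourier p1 \<xi> * fourier p2 \<xi>"
proof -
  define e where "e x = cis (- (x \<bullet> \<xi>))" for x :: "real^'n"
  define F where "F x y = p1 (x - y) * p2 y * e x" for x y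
  have conte: "continuous_on UNIV e" unfolding e_def by (auto intro!: continuous_intros)
  have ee: "e (y + z) = e y * e z" for y z by (simp add: e_def inner_add_left cis_mult)
  have intF: "integrable (lborel \<Otimes>\<^sub>M lborel) (case_prod F)"
    unfolding lborel_prod
  proof (rule int_cs[where r="3 * R"])
    show "continuous_on UNIV (case_prod F)"
      unfolding F_def split_beta
      by (intro continuous_intros continuous_on_compose2[OF c1] continuous_on_compose2[OF c2]
          continuous_on_compose2[OF conte]) auto
    fix p :: "(real^'n) \<times> (real^'n)" assume p: "norm p > 3 * R"
    obtain x y where xy: "p = (x, y)" by (cases p)
    have "norm x + norm y > 3 * R" using p norm_Pair_le[of x y] xy by simp
    moreover have "norm x \<le> norm (x - y) + norm y" using norm_triangle_ineq[of "x - y" y] by simp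
    ultimately have "norm (x - y) > R \<or> norm y > R" by linarith
    then show "case_prod F p = 0" using xy z1 z2 by (auto simp: F_def)
  qed
  have "fourier (conv p1 p2) \<xi> = (\<integral>x. (\<integral>y. F x y \<partial>lborel) \<partial>lborel)"
    by (simp add: fourier_def conv_def F_def e_def)
  also have "\<dots> = (\<integral>y. (\<integral>x. F x y \<partial>lborel) \<partial>lborel)"
    by (rule lborel_pair.Fubini_integral[symmetric, OF intF])
  also have "\<dots> = (\<integral>y. p2 y * e y * fourier p1 \<xi> \<partial>lborel)"
  proof (rule Bochner_Integration.integral_cong[OF refl])
    fix y
    have meas: "(\<lambda>x. p1 (x - y) * e x) \<in> borel_measurable borel"
      by (intro borel_measurable_continuous_onI continuous_intros continuous_on_compose2[OF c1] conte) auto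
    have "(\<integral>x. F x y \<partial>lborel) = p2 y * (\<integral>x. p1 (x - y) * e x \<partial>lborel)"
      unfolding F_def by (subst integral_mult_right_zero[symmetric]) (simp add: algebra_simps)
    also have "(\<integral>x. p1 (x - y) * e x \<partial>lborel) = (\<integral>z. p1 ((y + z) - y) * e (y + z) \<partial>lborel)"
      using integral_translate[OF meas, of y] by simp
    also have "\<dots> = (\<integral>z. e y * (p1 z * e z) \<partial>lborel)"
      by (simp only: ee add_diff_cancel_left') (simp add: algebra_simps)
    also have "\<dots> = e y * fourier p1 \<xi>"
      by (simp add: fourier_def e_def)
    finally show "(\<integral>x. F x y \<partial>lborel) = p2 y * e y * fourier p1 \<xi>" by simp
  qed
  also have "\<dots> = fourier p1 \<xi> * fourier p2 \<xi>"
    by (simp add: fourier_def e_def mult.commute)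
  finally show ?thesis .
qed

lemma cauchy_int_half: "(\<integral>\<^sup>+x. ennreal (1 / (1 + x\<^sup>2)) * indicator {0..} x \<partial>lborel) = ennreal (pi / 2)"
proof -
  have "(\<integral>\<^sup>+x. ennreal (1 / (1 + x\<^sup>2)) * indicator {0..} x \<partial>lborel) = ennreal (pi / 2 - arctan 0)"
  proof (rule nn_integral_FTC_atLeast)
    show "((\<lambda>x. 1 / (1 + x\<^sup>2)) :: real \<Rightarrow> real) \<in> borel_measurable borel" by measurable
    show "(arctan \<longlongrightarrow> pi / 2) at_top" by (rule tendsto_arctan_at_top)
    fix x :: real
    show "DERIV arctan x :> 1 / (1 + x\<^sup>2)"
      using DERIV_arctan[of x] by (simp add: divide_inverse)
  qed (simp add: add_nonneg_nonneg)
  then show ?thesis by simp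
qed

lemma cauchy_int_finite: "(\<integral>\<^sup>+x. ennreal (1 / (1 + x\<^sup>2)) \<partial>lborel) < \<infinity>"
proof -
  let ?g = "\<lambda>x::real. ennreal (1 / (1 + x\<^sup>2)) * indicator {0..} x"
  have "(\<integral>\<^sup>+x. ennreal (1 / (1 + x\<^sup>2)) \<partial>lborel) \<le> (\<integral>\<^sup>+x. ?g x + ?g (0 + (-1) * x) \<partial>lborel)"
    by (intro nn_integral_mono) (auto simp: indicator_def)
  also have "\<dots> = (\<integral>\<^sup>+x. ?g x \<partial>lborel) + (\<integral>\<^sup>+x. ?g (0 + (-1) * x) \<partial>lborel)"
    by (rule nn_integral_add) auto
  also have "(\<integral>\<^sup>+x. ?g (0 + (-1) * x) \<partial>lborel) = (\<integral>\<^sup>+x. ?g x \<partial>lborel)"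
    using nn_integral_real_affine[of ?g "-1" 0] by simp
  finally have "(\<integral>\<^sup>+x. ennreal (1 / (1 + x\<^sup>2)) \<partial>lborel) \<le> ennreal (pi/2) + ennreal (pi/2)"
    using cauchy_int_half by simp
  moreover have "ennreal (pi/2) + ennreal (pi/2) = ennreal pi"
    by (subst ennreal_plus[symmetric]) auto
  ultimately have "(\<integral>\<^sup>+x. ennreal (1 / (1 + x\<^sup>2)) \<partial>lborel) \<le> ennreal pi" by simp
  then show ?thesis by (metis ennreal_less_top infinity_ennreal_def le_less_trans)
qed

lemma weight_int:
  assumes a: "a \<ge> real CARD('n)"
  shows "(\<integral>\<^sup>+\<xi>. ennreal ((1 + (norm (\<xi>::real^'n))\<^sup>2) powr (-a)) \<partial>lborel) < \<infinity>"
proof -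
  let ?f = "\<lambda>(b::real^'n) (t::real). ennreal (1 / (1 + t\<^sup>2))"
  have pw: "ennreal ((1 + (norm \<xi>)\<^sup>2) powr (-a)) \<le> (\<Prod>b\<in>Basis. ?f b (\<xi> \<bullet> b))" for \<xi> :: "real^'n"
  proof -
    let ?w = "1 + (norm \<xi>)\<^sup>2"
    have w1: "?w \<ge> 1" by simp
    have "(\<Prod>b\<in>Basis. 1 + (\<xi> \<bullet> b)\<^sup>2) \<le> ?w ^ CARD('n)"
    proof (rule prod_le_power)
      fix b :: "real^'n" assume b: "b \<in> Basis"
      have "\<bar>\<xi> \<bullet> b\<bar> \<le> norm \<xi>" by (rule Basis_le_norm[OF b])
      then have "(\<xi> \<bullet> b)\<^sup>2 \<le> (norm \<xi>)\<^sup>2"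
        by (metis abs_ge_zero power2_abs power_mono)
      then show "0 \<le> 1 + (\<xi> \<bullet> b)\<^sup>2 \<and> 1 + (\<xi> \<bullet> b)\<^sup>2 \<le> ?w" by simp
    qed simp_all
    have pos: "0 < (\<Prod>b\<in>Basis. 1 + (\<xi> \<bullet> b)\<^sup>2)" by (intro prod_pos) (simp add: add_pos_nonneg)
    have "?w powr (-a) \<le> ?w powr (- real CARD('n))"
      using a w1 by (intro powr_mono) auto
    also have "\<dots> = 1 / ?w ^ CARD('n)"
    proof -
      have "?w powr real CARD('n) = ?w ^ CARD('n)" by (rule powr_realpow) (simp add: add_pos_nonneg)
      then show ?thesis by (metis powr_minus inverse_eq_divide)
    qed
    also have "\<dots> \<le> 1 / (\<Prod>b\<in>Basis. 1 + (\<xi> \<bullet> b)\<^sup>2)"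
      using pos \<open>(\<Prod>b\<in>Basis. 1 + (\<xi> \<bullet> b)\<^sup>2) \<le> ?w ^ CARD('n)\<close>
      by (intro divide_left_mono) auto
    also have "\<dots> = (\<Prod>b\<in>Basis. 1 / (1 + (\<xi> \<bullet> b)\<^sup>2))"
      by (simp add: prod_dividef)
    finally have "?w powr (-a) \<le> (\<Prod>b\<in>Basis. 1 / (1 + (\<xi> \<bullet> b)\<^sup>2))" .
    then show ?thesis
      by (subst prod_ennreal) (auto intro: ennreal_leI)
  qed
  have "(\<integral>\<^sup>+\<xi>. ennreal ((1 + (norm (\<xi>::real^'n))\<^sup>2) powr (-a)) \<partial>lborel)
      \<le> (\<integral>\<^sup>+\<xi>. (\<Prod>b\<in>Basis. ?f b (\<xi> \<bullet> b)) \<partial>lborel)"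
    by (intro nn_integral_mono pw)
  also have "\<dots> = (\<Prod>b\<in>(Basis::(real^'n) set). (\<integral>\<^sup>+t. ?f b t \<partial>lborel))"
    by (rule nn_integral_lborel_prod) auto
  also have "\<dots> < \<infinity>"
    using cauchy_int_finite by (simp add: less_top[symmetric] power_eq_top_ennreal)
  finally show ?thesis .
qed

lemma fourier_diff_bound:
  fixes g :: "real^'n \<Rightarrow> complex"
  assumes cg: "continuous_on UNIV g" and zg: "\<And>x. norm x > R \<Longrightarrow> g x = 0" and R: "R \<ge> 0"
  shows "norm (fourier g (\<xi> - \<theta>) - fourier g \<xi>) \<le> R * norm \<theta> * (\<integral>x. norm (g x) \<partial>lborel)"
proof -
  have i1: "integrable lborel (\<lambda>x. g x * cis (- (x \<bullet> \<eta>)))" for \<eta>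
    by (rule int_cs[where r=R]) (auto intro!: continuous_intros cg simp: zg)
  have ig: "integrable lborel (\<lambda>x. norm (g x))"
    by (rule int_cs[where r=R]) (auto intro!: continuous_intros cg simp: zg)
  have "fourier g (\<xi> - \<theta>) - fourier g \<xi> = (\<integral>x. g x * cis (- (x \<bullet> (\<xi> - \<theta>))) - g x * cis (- (x \<bullet> \<xi>)) \<partial>lborel)"
    unfolding fourier_def using i1 by simp
  also have "norm \<dots> \<le> (\<integral>x. norm (g x) * (R * norm \<theta>) \<partial>lborel)"
  proof (rule Bochner_Integration.integral_norm_bound_integral)
    show "integrable lborel (\<lambda>x. g x * cis (- (x \<bullet> (\<xi> - \<theta>))) - g x * cis (- (x \<bullet> \<xi>)))"
      using i1 by simp
    show "integrable lborel (\<lambda>x. norm (g x) * (R * norm \<theta>))" using ig by simp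
    fix x :: "real^'n"
    have e: "g x * cis (- (x \<bullet> (\<xi> - \<theta>))) - g x * cis (- (x \<bullet> \<xi>)) = g x * cis (- (x \<bullet> \<xi>)) * (cis (x \<bullet> \<theta>) - 1)"
    proof -
      have c: "cis (x \<bullet> \<theta> - x \<bullet> \<xi>) = cis (x \<bullet> \<theta>) * cis (- (x \<bullet> \<xi>))"
        by (simp add: cis_mult)
      show ?thesis by (simp add: c algebra_simps)
    qed
    show "norm (g x * cis (- (x \<bullet> (\<xi> - \<theta>))) - g x * cis (- (x \<bullet> \<xi>))) \<le> norm (g x) * (R * norm \<theta>)"
    proof (cases "norm x \<le> R")
      case True
      have "cmod (cis (x \<bullet> \<theta>) - 1) \<le> \<bar>x \<bullet> \<theta>\<bar>" by (rule cmod_cis_minus_one)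
      also have "\<dots> \<le> norm x * norm \<theta>" by (rule Cauchy_Schwarz_ineq2)
      also have "\<dots> \<le> R * norm \<theta>" using True by (intro mult_right_mono) auto
      finally show ?thesis unfolding e by (simp add: norm_mult mult_left_mono)
    qed (simp add: zg)
  qed
  also have "\<dots> = R * norm \<theta> * (\<integral>x. norm (g x) \<partial>lborel)" by simp
  finally show ?thesis .
qed

lemma peetre: "1 + (norm (\<xi>::'a::real_normed_vector))\<^sup>2 \<le> 2 * (1 + (norm \<theta>)\<^sup>2) * (1 + (norm (\<xi> - \<theta>))\<^sup>2)"
proof -
  have "norm \<xi> \<le> norm \<theta> + norm (\<xi> - \<theta>)" using norm_triangle_ineq[of \<theta> "\<xi> - \<theta>"] by simp
  then have "(norm \<xi>)\<^sup>2 \<le> (norm \<theta> + norm (\<xi> - \<theta>))\<^sup>2" by (simp add: power_mono)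
  also have "\<dots> \<le> 2 * (norm \<theta>)\<^sup>2 + 2 * (norm (\<xi> - \<theta>))\<^sup>2"
    using sum_squares_ge_zero[of "norm \<theta> - norm (\<xi> - \<theta>)" 0] by (simp add: power2_eq_square algebra_simps)
  finally have h: "(norm \<xi>)\<^sup>2 \<le> 2 * (norm \<theta>)\<^sup>2 + 2 * (norm (\<xi> - \<theta>))\<^sup>2" .
  have p: "0 \<le> (norm \<theta>)\<^sup>2 * (norm (\<xi> - \<theta>))\<^sup>2" by simp
  have "2 * (1 + (norm \<theta>)\<^sup>2) * (1 + (norm (\<xi> - \<theta>))\<^sup>2)
      = 2 + 2 * (norm \<theta>)\<^sup>2 + 2 * (norm (\<xi> - \<theta>))\<^sup>2 + 2 * ((norm \<theta>)\<^sup>2 * (norm (\<xi> - \<theta>))\<^sup>2)"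
    by (simp add: algebra_simps)
  then show ?thesis using h p by linarith
qed

lemma sum_powr_le: fixes u v q :: real assumes "0 \<le> u" "0 \<le> v" "0 < q" shows "(u + v) powr q \<le> 2 powr q * (u powr q + v powr q)"
proof (cases "u \<le> v")
  case True
  have "(u + v) powr q \<le> (2 * v) powr q" using assms True by (intro powr_mono2) auto
  also have "\<dots> = 2 powr q * v powr q" using assms by (simp add: powr_mult)
  also have "\<dots> \<le> 2 powr q * (u powr q + v powr q)" by (intro mult_left_mono) auto
  finally show ?thesis .
next
  case False
  have "(u + v) powr q \<le> (2 * u) powr q" using assms False by (intro powr_mono2) auto
  also have "\<dots> = 2 powr q * u powr q" using assms by (simp add: powr_mult)
  also have "\<dots> \<le> 2 powr q * (u powr q + v powr q)" by (intro mult_left_mono) auto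
  finally show ?thesis .
qed

lemma Lq_le:
  fixes F :: "real^'n \<Rightarrow> complex"
  assumes q: "q > 0" and G: "G \<ge> 0" and pw: "\<And>\<xi>. norm (F \<xi>) \<le> G * (u \<xi> + v \<xi>)"
    and u0: "\<And>\<xi>. u \<xi> \<ge> 0" and v0: "\<And>\<xi>. v \<xi> \<ge> 0"
    and mu: "u \<in> borel_measurable borel" and mv: "v \<in> borel_measurable borel"
    and Iu: "(\<integral>\<^sup>+\<xi>. ennreal (u \<xi> powr q) \<partial>lborel) \<le> ennreal I"
    and Iv: "(\<integral>\<^sup>+\<xi>. ennreal (v \<xi> powr q) \<partial>lborel) \<le> ennreal I" and I: "I \<ge> 0"
  shows "Lq_norm q F \<le> ennreal (G * (2 powr q * (2 * I)) powr (1/q))"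
proof -
  define c where "c = G powr q * 2 powr q"
  have c0: "c \<ge> 0" unfolding c_def by simp
  have pt: "ennreal (norm (F \<xi>) powr q) \<le> ennreal c * (ennreal (u \<xi> powr q) + ennreal (v \<xi> powr q))" for \<xi>
  proof -
    have "norm (F \<xi>) powr q \<le> (G * (u \<xi> + v \<xi>)) powr q" using pw q by (intro powr_mono2) auto
    also have "\<dots> = G powr q * (u \<xi> + v \<xi>) powr q" using G u0 v0 by (simp add: powr_mult add_nonneg_nonneg)
    also have "\<dots> \<le> G powr q * (2 powr q * (u \<xi> powr q + v \<xi> powr q))"
      using u0 v0 q by (intro mult_left_mono sum_powr_le) auto
    finally have "norm (F \<xi>) powr q \<le> c * (u \<xi> powr q + v \<xi> powr q)" by (simp add: c_def mult.assoc)
    moreover have "ennreal c * (ennreal (u \<xi> powr q) + ennreal (v \<xi> powr q)) = ennreal (c * (u \<xi> powr q + v \<xi> powr q))"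
      using c0 by (simp add: ennreal_mult)
    ultimately show ?thesis by (simp add: ennreal_leI)
  qed
  define J where "J = (\<integral>\<^sup>+\<xi>. ennreal (norm (F \<xi>) powr q) \<partial>lborel)"
  have "J \<le> (\<integral>\<^sup>+\<xi>. ennreal c * (ennreal (u \<xi> powr q) + ennreal (v \<xi> powr q)) \<partial>lborel)"
    unfolding J_def by (intro nn_integral_mono pt)
  also have "\<dots> = ennreal c * ((\<integral>\<^sup>+\<xi>. ennreal (u \<xi> powr q) \<partial>lborel) + (\<integral>\<^sup>+\<xi>. ennreal (v \<xi> powr q) \<partial>lborel))"
  proof -
    have [measurable]: "u \<in> borel_measurable borel" "v \<in> borel_measurable borel" using mu mv by auto
    have "(\<integral>\<^sup>+\<xi>. ennreal (u \<xi> powr q) + ennreal (v \<xi> powr q) \<partial>lborel)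
        = (\<integral>\<^sup>+\<xi>. ennreal (u \<xi> powr q) \<partial>lborel) + (\<integral>\<^sup>+\<xi>. ennreal (v \<xi> powr q) \<partial>lborel)"
      by (rule nn_integral_add) measurable
    moreover have "(\<integral>\<^sup>+\<xi>. ennreal c * (ennreal (u \<xi> powr q) + ennreal (v \<xi> powr q)) \<partial>lborel)
        = ennreal c * (\<integral>\<^sup>+\<xi>. ennreal (u \<xi> powr q) + ennreal (v \<xi> powr q) \<partial>lborel)"
      by (rule nn_integral_cmult) measurable
    ultimately show ?thesis by simp
  qed
  also have "\<dots> \<le> ennreal c * (ennreal I + ennreal I)"
    by (intro mult_left_mono add_mono Iu Iv) auto
  also have "\<dots> = ennreal (c * (2 * I))"
  proof -
    have "ennreal (I + I) = ennreal I + ennreal I" by (rule ennreal_plus) (use I in auto)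
    moreover have "ennreal (c * (I + I)) = ennreal c * ennreal (I + I)" by (rule ennreal_mult) (use I c0 in auto)
    ultimately show ?thesis by (simp only: mult_2)
  qed
  finally have J: "J \<le> ennreal (c * (2 * I))" .
  have Jfin: "J \<noteq> \<infinity>" unfolding infinity_ennreal_def by (rule neq_top_trans[OF ennreal_neq_top J])
  have "enn2real J \<le> c * (2 * I)" using c0 I by (intro enn2real_leI J) simp
  then have "enn2real J powr (1/q) \<le> (c * (2 * I)) powr (1/q)" using q by (intro powr_mono2) auto
  also have "(c * (2 * I)) powr (1/q) = G * (2 powr q * (2 * I)) powr (1/q)"
  proof -
    have "(c * (2 * I)) powr (1/q) = (G powr q) powr (1/q) * (2 powr q * (2 * I)) powr (1/q)"
    proof -
      have e: "c * (2 * I) = G powr q * (2 powr q * (2 * I))" by (simp add: c_def mult.assoc)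
      show ?thesis unfolding e using G I by (auto intro!: powr_mult)
    qed
    also have "(G powr q) powr (1/q) = G" using G q by (simp add: powr_powr)
    finally show ?thesis .
  qed
  finally have "enn2real J powr (1/q) \<le> G * (2 powr q * (2 * I)) powr (1/q)" .
  then show ?thesis
    unfolding Lq_norm_def Let_def J_def[symmetric] using Jfin by (simp only: if_False) (rule ennreal_leI)
qed

lemma sup_lower:
  fixes \<theta> :: "real^'n"
  assumes R: "R > 0" and t0: "\<theta> \<noteq> 0" and t1: "norm \<theta> \<le> 1"
  shows "min R 1 * norm \<theta> / 2 \<le> (SUP t\<in>cball 0 R. cmod (cis (\<theta> \<bullet> t) - 1))"
proof -
  define r where "r = min R 1"
  define t where "t = (r / norm \<theta>) *\<^sub>R \<theta>"
  have r: "0 < r" "r \<le> R" "r \<le> 1" using R by (auto simp: r_def)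
  have nt: "norm t = r" using t0 r by (simp add: t_def)
  have it: "\<theta> \<bullet> t = r * norm \<theta>"
    using t0 by (simp add: t_def power2_norm_eq_inner[symmetric] power2_eq_square)
  have "r * norm \<theta> \<le> 1" using r t1 by (simp add: mult_le_one)
  then have "\<bar>r * norm \<theta>\<bar> / 2 \<le> cmod (cis (r * norm \<theta>) - 1)" by (intro cmod_cis_minus_one_lower) (use r in auto)
  then have "r * norm \<theta> / 2 \<le> cmod (cis (\<theta> \<bullet> t) - 1)" using r by (simp add: it)
  also have "\<dots> \<le> (SUP t\<in>cball 0 R. cmod (cis (\<theta> \<bullet> t) - 1))"
  proof (rule cSUP_upper)
    show "t \<in> cball 0 R" using nt r by simp
    have "cmod (cis a - 1) \<le> 2" for a using norm_triangle_ineq4[of "cis a" 1] by simp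
    then show "bdd_above ((\<lambda>t. cmod (cis (\<theta> \<bullet> t) - 1)) ` cball 0 R)" by (rule bdd_aboveI2)
  qed
  finally show ?thesis by (simp add: r_def)
qed

lemma final_ineq:
  fixes R a s :: real
  assumes R: "R > 0" and a0: "0 < a" and a1: "a < 1" and s: "s > 0"
  shows "\<exists>c>0. \<forall>\<theta>::real^'n. min (norm \<theta>) 1 * (1 + (norm \<theta>)\<^sup>2) powr (s/2)
            \<le> c * (norm \<theta> powr a * (SUP t\<in>cball 0 R. cmod (cis (\<theta> \<bullet> t) - 1)) powr (1 - a) + norm \<theta> powr s)"
proof -
  define r where "r = min R 1"
  have r: "0 < r" "r \<le> 1" using R by (auto simp: r_def)
  define c where "c = 2 powr (s/2) * (1 + (2/r) powr (1-a))"
  have c1: "c \<ge> 2 powr (s/2)" unfolding c_def by (simp add: mult_le_cancel_left1)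
  have c2: "c \<ge> 2 powr (s/2) * (2/r) powr (1-a)" unfolding c_def by (intro mult_left_mono) auto
  have c0: "c > 0" unfolding c_def using r by (simp add: add_pos_nonneg)
  show ?thesis
  proof (intro exI[of _ c] conjI allI c0)
    fix \<theta> :: "real^'n"
    let ?S = "(SUP t\<in>cball 0 R. cmod (cis (\<theta> \<bullet> t) - 1))"
    let ?t = "norm \<theta>"
    let ?X = "?t powr a * ?S powr (1 - a)"
    have X0: "?X \<ge> 0" by simp
    have T0: "?t powr s \<ge> 0" by simp
    consider "\<theta> = 0" | "?t \<ge> 1" | "\<theta> \<noteq> 0" "?t < 1" by fastforce
    then show "min ?t 1 * (1 + ?t\<^sup>2) powr (s/2) \<le> c * (?X + ?t powr s)"
    proof cases
      case 1 then show ?thesis using c0 by simp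
    next
      case 2
      have "(1 + ?t\<^sup>2) powr (s/2) \<le> (2 * ?t\<^sup>2) powr (s/2)"
        using 2 s one_le_power[of ?t 2] by (intro powr_mono2) auto
      also have "(2 * ?t\<^sup>2) powr (s/2) = 2 powr (s/2) * ?t powr s"
      proof -
        have "(?t\<^sup>2) powr (s/2) = ?t powr s"
        proof -
          have e: "?t\<^sup>2 = ?t powr 2" using 2 by (simp add: powr_numeral)
          have "(?t\<^sup>2) powr (s/2) = (?t powr 2) powr (s/2)" by (simp only: e)
          also have "\<dots> = ?t powr s" by (simp only: powr_powr) simp
          finally show ?thesis .
        qed
        moreover have "(2 * ?t\<^sup>2) powr (s/2) = 2 powr (s/2) * (?t\<^sup>2) powr (s/2)"
          by (rule powr_mult)
        ultimately show ?thesis by (simp only:)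
      qed
      also have "\<dots> \<le> c * ?t powr s" using c1 by (intro mult_right_mono) auto
      also have "\<dots> \<le> c * (?X + ?t powr s)" using c0 X0 by (intro mult_left_mono) auto
      finally show ?thesis using 2 by simp
    next
      case 3
      have tpos: "?t > 0" using 3 by simp
      have "(1 + ?t\<^sup>2) powr (s/2) \<le> 2 powr (s/2)"
        using 3 s power_le_one[of ?t 2] by (intro powr_mono2) auto
      then have L: "min ?t 1 * (1 + ?t\<^sup>2) powr (s/2) \<le> ?t * 2 powr (s/2)"
        using 3 by (simp add: mult_left_mono)
      have Sl: "r * ?t / 2 \<le> ?S" using sup_lower[OF R 3(1) less_imp_le[OF 3(2)]] by (simp add: r_def)
      have "(r * ?t / 2) powr (1 - a) \<le> ?S powr (1 - a)"
        using Sl r tpos a1 by (intro powr_mono2) auto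
      moreover have "(r * ?t / 2) powr (1 - a) = (r/2) powr (1-a) * ?t powr (1 - a)"
        using r tpos by (simp add: powr_mult[symmetric])
      ultimately have "?t powr a * ((r/2) powr (1-a) * ?t powr (1 - a)) \<le> ?X"
        by (intro mult_left_mono) auto
      moreover have "?t powr a * ((r/2) powr (1-a) * ?t powr (1 - a)) = (r/2) powr (1-a) * ?t"
        using tpos by (simp add: powr_add[symmetric] mult.commute mult.left_commute)
      ultimately have tX: "(r/2) powr (1-a) * ?t \<le> ?X" by simp
      have "?t = (2/r) powr (1-a) * ((r/2) powr (1-a) * ?t)"
        using r by (simp add: powr_mult[symmetric])
      also have "\<dots> \<le> (2/r) powr (1-a) * ?X" using tX by (intro mult_left_mono) auto
      finally have tle: "?t \<le> (2/r) powr (1-a) * ?X" .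
      have "?t * 2 powr (s/2) \<le> (2/r) powr (1-a) * ?X * 2 powr (s/2)"
        using tle by (intro mult_right_mono) auto
      also have "\<dots> = (2 powr (s/2) * (2/r) powr (1-a)) * ?X" by simp
      also have "\<dots> \<le> c * ?X" using c2 X0 by (intro mult_right_mono) auto
      also have "\<dots> \<le> c * (?X + ?t powr s)" using c0 T0 by (intro mult_left_mono) auto
      finally show ?thesis using L by linarith
    qed
  qed
qed

lemma jbr_powr: "jbr \<xi> powr s = (1 + (norm \<xi>)\<^sup>2) powr (s/2)"
proof -
  have "jbr \<xi> = (1 + (norm \<xi>)\<^sup>2) powr (1/2)" unfolding jbr_def by (simp add: powr_half_sqrt)
  then show ?thesis by (simp add: powr_powr)
qed

lemma pw_bound:
  fixes f1 f2 :: "real^'n \<Rightarrow> complex" and m :: real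
  assumes A1: "A1 \<ge> 0" and A2: "A2 \<ge> 0" and B1: "B1 \<ge> 0" and B2: "B2 \<ge> 0" and s: "s \<ge> 0"
    and dec1: "\<And>\<xi>. norm (f1 \<xi>) \<le> A1 * (1 + (norm \<xi>)\<^sup>2) powr (-m)"
    and dec2: "\<And>\<xi>. norm (f2 \<xi>) \<le> A2 * (1 + (norm \<xi>)\<^sup>2) powr (-m)"
    and bd2: "\<And>\<xi>. norm (f2 \<xi>) \<le> A2"
    and d1: "\<And>\<xi>. norm (f1 (\<xi> - \<theta>) - f1 \<xi>) \<le> B1 * norm \<theta>"
    and d2: "\<And>\<xi>. norm (f2 (\<xi> - \<theta>) - f2 \<xi>) \<le> B2 * norm \<theta>"
  shows "norm (complex_of_real (jbr \<xi> powr s) * (f1 (\<xi> - \<theta>) * f2 (\<xi> - \<theta>) - f1 \<xi> * f2 \<xi>))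
     \<le> (A1*B2 + A2*B1 + A1*A2) * min (norm \<theta>) 1 * (2 * (1 + (norm \<theta>)\<^sup>2)) powr (s/2)
        * ((1 + (norm (\<xi> - \<theta>))\<^sup>2) powr (s/2 - m) + (1 + (norm \<xi>)\<^sup>2) powr (s/2 - m))"
proof -
  define K where "K = A1*B2 + A2*B1 + A1*A2"
  have K: "K \<ge> 0" unfolding K_def using A1 A2 B1 B2 by simp
  define \<eta> where "\<eta> = \<xi> - \<theta>"
  define wx where "wx = 1 + (norm \<xi>)\<^sup>2"
  define we where "we = 1 + (norm \<eta>)\<^sup>2"
  define wt where "wt = 1 + (norm \<theta>)\<^sup>2"
  define U where "U = we powr (-m)"
  define V where "V = wx powr (-m)"
  have wx1: "wx \<ge> 1" and we1: "we \<ge> 1" and wt1: "wt \<ge> 1" by (simp_all add: wx_def we_def wt_def)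
  have U0: "U \<ge> 0" and V0: "V \<ge> 0" by (simp_all add: U_def V_def)
  define D where "D = f1 \<eta> * f2 \<eta> - f1 \<xi> * f2 \<xi>"
  have Db1: "norm D \<le> K * norm \<theta> * (U + V)"
  proof -
    have "D = f1 \<eta> * (f2 \<eta> - f2 \<xi>) + f2 \<xi> * (f1 \<eta> - f1 \<xi>)" by (simp add: D_def algebra_simps)
    then have "norm D \<le> norm (f1 \<eta>) * norm (f2 \<eta> - f2 \<xi>) + norm (f2 \<xi>) * norm (f1 \<eta> - f1 \<xi>)"
      by (metis norm_mult norm_triangle_ineq)
    also have "\<dots> \<le> (A1 * U) * (B2 * norm \<theta>) + (A2 * V) * (B1 * norm \<theta>)"
      using dec1[of \<eta>] dec2[of \<xi>] d1[of \<xi>] d2[of \<xi>] A1 A2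
      by (intro add_mono mult_mono) (auto simp: U_def V_def we_def wx_def \<eta>_def)
    also have "\<dots> \<le> K * norm \<theta> * (U + V)"
      using A1 A2 B1 B2 U0 V0 unfolding K_def
      by (simp add: algebra_simps add_mono mult_nonneg_nonneg add_increasing2)
    finally show ?thesis .
  qed
  have Db2: "norm D \<le> K * (U + V)"
  proof -
    have "norm D \<le> norm (f1 \<eta>) * norm (f2 \<eta>) + norm (f1 \<xi>) * norm (f2 \<xi>)"
      unfolding D_def by (metis norm_mult norm_triangle_ineq4)
    also have "\<dots> \<le> (A1 * U) * A2 + (A1 * V) * A2"
      using dec1[of \<eta>] dec1[of \<xi>] bd2[of \<eta>] bd2[of \<xi>] A1 A2
      by (intro add_mono mult_mono) (auto simp: U_def V_def we_def wx_def \<eta>_def)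
    also have "\<dots> \<le> K * (U + V)"
      using A1 A2 B1 B2 U0 V0 unfolding K_def
      by (simp add: algebra_simps add_increasing2)
    finally show ?thesis .
  qed
  have Db: "norm D \<le> K * min (norm \<theta>) 1 * (U + V)"
    using Db1 Db2 by (cases "norm \<theta> \<le> 1") (auto simp: min_def)
  have jb: "jbr \<xi> powr s = wx powr (s/2)" by (simp add: jbr_powr wx_def)
  have pe: "wx \<le> 2 * wt * we" unfolding wx_def wt_def we_def \<eta>_def by (rule peetre)
  have T1: "wx powr (s/2) * U \<le> (2 * wt) powr (s/2) * we powr (s/2 - m)"
  proof -
    have "wx powr (s/2) \<le> (2 * wt * we) powr (s/2)" using pe wx1 s by (intro powr_mono2) auto
    also have "\<dots> = (2 * wt) powr (s/2) * we powr (s/2)" by (simp add: powr_mult)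
    finally have a: "wx powr (s/2) * U \<le> (2 * wt) powr (s/2) * we powr (s/2) * U"
      using U0 by (intro mult_right_mono) auto
    have b: "we powr (s/2) * U = we powr (s/2 - m)"
      unfolding U_def using we1 by (simp add: powr_add[symmetric])
    show ?thesis using a b by (simp add: mult.assoc)
  qed
  have T2: "wx powr (s/2) * V \<le> (2 * wt) powr (s/2) * wx powr (s/2 - m)"
  proof -
    have "wx powr (s/2) * V = wx powr (s/2 - m)"
      unfolding V_def using wx1 by (simp add: powr_add[symmetric])
    also have "\<dots> \<le> (2 * wt) powr (s/2) * wx powr (s/2 - m)"
    proof -
      have "1 \<le> (2 * wt) powr (s/2)" using wt1 s by (intro ge_one_powr_ge_zero) auto
      then have "1 * wx powr (s / 2 - m) \<le> (2 * wt) powr (s/2) * wx powr (s / 2 - m)"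
        by (intro mult_right_mono) auto
      then show ?thesis by simp
    qed
    finally show ?thesis .
  qed
  have "norm (complex_of_real (jbr \<xi> powr s) * D) = wx powr (s/2) * norm D"
    by (simp add: norm_mult jb)
  also have "\<dots> \<le> wx powr (s/2) * (K * min (norm \<theta>) 1 * (U + V))"
    using Db by (intro mult_left_mono) auto
  also have "\<dots> = K * min (norm \<theta>) 1 * (wx powr (s/2) * U + wx powr (s/2) * V)"
    by (simp add: algebra_simps)
  also have "\<dots> \<le> K * min (norm \<theta>) 1 * ((2 * wt) powr (s/2) * we powr (s/2 - m) + (2 * wt) powr (s/2) * wx powr (s/2 - m))"
    using K T1 T2 by (intro mult_left_mono add_mono) auto
  also have "\<dots> = K * min (norm \<theta>) 1 * (2 * wt) powr (s/2) * (we powr (s/2 - m) + wx powr (s/2 - m))"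
    by (simp add: algebra_simps)
  finally show ?thesis by (simp add: D_def K_def \<eta>_def we_def wx_def wt_def)
qed

lemma decay_powr:
  assumes "(1 + (norm \<xi>)\<^sup>2) ^ m * norm (z::complex) \<le> A"
  shows "norm z \<le> A * (1 + (norm (\<xi>::real^'n))\<^sup>2) powr (- real m)" and "norm z \<le> A"
proof -
  let ?w = "1 + (norm \<xi>)\<^sup>2"
  have w: "?w \<ge> 1" by simp
  have p: "?w powr (- real m) = inverse (?w ^ m)"
  proof -
    have "?w powr real m = ?w ^ m" by (rule powr_realpow) (simp add: add_pos_nonneg)
    then show ?thesis by (metis powr_minus)
  qed
  have pos: "?w ^ m > 0" by (simp add: add_pos_nonneg)
  have "norm z \<le> A / ?w ^ m" using assms pos by (simp add: field_simps mult.commute)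
  then show "norm z \<le> A * ?w powr (- real m)" by (simp add: p divide_inverse)
  have "1 * norm z \<le> ?w ^ m * norm z" using w by (intro mult_right_mono one_le_power) auto
  then show "norm z \<le> A" using assms by simp
qed

theorem mainTheorem12:
  fixes q s R :: real
    and psi1 psi2 :: "real ^ 'n \<Rightarrow> complex"
  defines "q' \<equiv> q / (q - 1)"
  defines "n \<equiv> real CARD('n)"
  defines "psi \<equiv> conv psi1 psi2"
  assumes "1 < q" and "q \<le> 2"
    and "n / q' < s" and "s < n / q' + 1"
    and "R > 0"
    and "smooth_fun psi1" and "smooth_fun psi2"
    and "\<forall>x. norm x > R \<longrightarrow> psi1 x = 0"
    and "\<forall>x. norm x > R \<longrightarrow> psi2 x = 0"
  shows "\<exists>C>0. \<forall>\<theta> :: real ^ 'n.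
           Lq_norm q (\<lambda>\<xi>. complex_of_real (jbr \<xi> powr s) *
                             (fourier psi (\<xi> - \<theta>) - fourier psi \<xi>))
           \<le> ennreal (C * (norm \<theta> powr (s - n / q') *
                 (SUP t\<in>cball 0 R. cmod (cis (\<theta> \<bullet> t) - 1)) powr (1 - (s - n / q'))
                 + norm \<theta> powr s))"
proof -
  have q1: "1 < q" by fact
  have R0: "R > 0" by fact
  have sm1: "smooth_fun psi1" and sm2: "smooth_fun psi2" by fact+
  have z1: "\<And>x. norm x > R \<Longrightarrow> psi1 x = 0" using \<open>\<forall>x. norm x > R \<longrightarrow> psi1 x = 0\<close> by blast
  have z2: "\<And>x. norm x > R \<Longrightarrow> psi2 x = 0" using \<open>\<forall>x. norm x > R \<longrightarrow> psi2 x = 0\<close> by blast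
  have c1: "continuous_on UNIV psi1" by (rule ip_cont[OF sm1 z1 iter_partials.base])
  have c2: "continuous_on UNIV psi2" by (rule ip_cont[OF sm2 z2 iter_partials.base])
  have n1: "n \<ge> 1" unfolding n_def by simp
  have q'pos: "q' > 0" unfolding q'_def using q1 by simp
  have s0: "s > 0" using \<open>n / q' < s\<close> n1 q'pos by (smt (verit) divide_pos_pos)
  define a where "a = s - n / q'"
  have a0: "0 < a" and a1: "a < 1" using \<open>n / q' < s\<close> \<open>s < n / q' + 1\<close> by (auto simp: a_def)
  obtain c where c0: "c > 0" and cineq: "\<And>\<theta>::real^'n. min (norm \<theta>) 1 * (1 + (norm \<theta>)\<^sup>2) powr (s/2)
            \<le> c * (norm \<theta> powr a * (SUP t\<in>cball 0 R. cmod (cis (\<theta> \<bullet> t) - 1)) powr (1 - a) + norm \<theta> powr s)"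
    using final_ineq[OF R0 a0 a1 s0, where 'n='n] by blast
  define m :: nat where "m = nat \<lceil>n + s\<rceil>"
  have m: "real m \<ge> n + s" unfolding m_def by (rule real_nat_ceiling_ge)
  obtain A1 where A10: "A1 \<ge> 0" and A1: "\<And>\<xi>. (1 + (norm \<xi>)\<^sup>2) ^ m * norm (fourier psi1 \<xi>) \<le> A1"
    using fourier_decay[OF sm1 z1, where m=m] by blast
  obtain A2 where A20: "A2 \<ge> 0" and A2: "\<And>\<xi>. (1 + (norm \<xi>)\<^sup>2) ^ m * norm (fourier psi2 \<xi>) \<le> A2"
    using fourier_decay[OF sm2 z2, where m=m] by blast
  define B1 where "B1 = R * (\<integral>x. norm (psi1 x) \<partial>lborel)"
  define B2 where "B2 = R * (\<integral>x. norm (psi2 x) \<partial>lborel)"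
  have B10: "B1 \<ge> 0" and B20: "B2 \<ge> 0" using R0 by (simp_all add: B1_def B2_def)
  have d1: "\<And>\<xi> \<theta>. norm (fourier psi1 (\<xi> - \<theta>) - fourier psi1 \<xi>) \<le> B1 * norm \<theta>"
  proof -
    fix \<xi> \<theta> :: "real^'n"
    have "R * norm \<theta> * (\<integral>x. norm (psi1 x) \<partial>lborel) = B1 * norm \<theta>" by (simp add: B1_def)
    then show "norm (fourier psi1 (\<xi> - \<theta>) - fourier psi1 \<xi>) \<le> B1 * norm \<theta>"
      using fourier_diff_bound[where R=R, OF c1 z1 less_imp_le[OF R0], of \<xi> \<theta>] by linarith
  qed
  have d2: "\<And>\<xi> \<theta>. norm (fourier psi2 (\<xi> - \<theta>) - fourier psi2 \<xi>) \<le> B2 * norm \<theta>"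
  proof -
    fix \<xi> \<theta> :: "real^'n"
    have "R * norm \<theta> * (\<integral>x. norm (psi2 x) \<partial>lborel) = B2 * norm \<theta>" by (simp add: B2_def)
    then show "norm (fourier psi2 (\<xi> - \<theta>) - fourier psi2 \<xi>) \<le> B2 * norm \<theta>"
      using fourier_diff_bound[where R=R, OF c2 z2 less_imp_le[OF R0], of \<xi> \<theta>] by linarith
  qed
  have convF: "\<And>\<xi>. fourier psi \<xi> = fourier psi1 \<xi> * fourier psi2 \<xi>"
    unfolding psi_def by (rule conv_thm[OF c1 c2 z1 z2])
  define K where "K = A1*B2 + A2*B1 + A1*A2"
  have K0: "K \<ge> 0" unfolding K_def using A10 A20 B10 B20 by simp
  define P where "P = real m - s/2"
  have Pn: "P \<ge> n" and P0: "P > 0" using m s0 n1 by (auto simp: P_def)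
  define w where "w \<xi> = 1 + (norm (\<xi>::real^'n))\<^sup>2" for \<xi>
  have wm [measurable]: "w \<in> borel_measurable borel" unfolding w_def by measurable
  define W where "W = (\<integral>\<^sup>+\<xi>. ennreal (w \<xi> powr (- (P * q))) \<partial>lborel)"
  have "P * q \<ge> real CARD('n)"
  proof -
    have "P * 1 \<le> P * q" using P0 q1 by (intro mult_left_mono) auto
    then show ?thesis using Pn n_def by simp
  qed
  then have Wfin: "W < \<infinity>" unfolding W_def w_def by (rule weight_int)
  define I where "I = enn2real W"
  have I0: "I \<ge> 0" unfolding I_def by simp
  have WI: "W = ennreal I" unfolding I_def using Wfin by simp
  define L0 where "L0 = (2 powr q * (2 * I)) powr (1/q)"
  have L00: "L0 \<ge> 0" unfolding L0_def by simp
  define C where "C = K * L0 * 2 powr (s/2) * c + 1"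
  have CK: "K * L0 * 2 powr (s/2) * c \<le> C" unfolding C_def by simp
  have Cpos: "C > 0" unfolding C_def using K0 L00 c0 by (simp add: add_nonneg_pos)
  show ?thesis
  proof (intro exI[of _ C] conjI allI Cpos)
    fix \<theta> :: "real^'n"
    let ?F = "\<lambda>\<xi>. complex_of_real (jbr \<xi> powr s) * (fourier psi (\<xi> - \<theta>) - fourier psi \<xi>)"
    let ?RHS = "norm \<theta> powr (s - n / q') * (SUP t\<in>cball 0 R. cmod (cis (\<theta> \<bullet> t) - 1)) powr (1 - (s - n / q')) + norm \<theta> powr s"
    define G where "G = K * min (norm \<theta>) 1 * (2 * (1 + (norm \<theta>)\<^sup>2)) powr (s/2)"
    define u where "u \<xi> = w (\<xi> - \<theta>) powr (s/2 - real m)" for \<xi>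
    define v where "v \<xi> = w \<xi> powr (s/2 - real m)" for \<xi>
    have G0: "G \<ge> 0" unfolding G_def using K0 by simp
    have pw: "norm (?F \<xi>) \<le> G * (u \<xi> + v \<xi>)" for \<xi>
    proof -
      have "norm (?F \<xi>) = norm (complex_of_real (jbr \<xi> powr s) *
          (fourier psi1 (\<xi> - \<theta>) * fourier psi2 (\<xi> - \<theta>) - fourier psi1 \<xi> * fourier psi2 \<xi>))"
        by (simp add: convF)
      also have "\<dots> \<le> G * (u \<xi> + v \<xi>)"
        unfolding G_def u_def v_def w_def K_def
        by (rule pw_bound[OF A10 A20 B10 B20 less_imp_le[OF s0]])
           (use decay_powr(1)[OF A1] decay_powr(1)[OF A2] decay_powr(2)[OF A2] d1 d2 in auto)
      finally show ?thesis .
    qed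
    have u0: "u \<xi> \<ge> 0" and v0: "v \<xi> \<ge> 0" for \<xi> by (simp_all add: u_def v_def)
    have mu: "u \<in> borel_measurable borel" unfolding u_def by measurable
    have mv: "v \<in> borel_measurable borel" unfolding v_def by measurable
    have eq: "(x powr (s/2 - real m)) powr q = x powr (- (P * q))" for x :: real
      by (simp add: powr_powr P_def algebra_simps)
    have Iv: "(\<integral>\<^sup>+\<xi>. ennreal (v \<xi> powr q) \<partial>lborel) \<le> ennreal I"
      unfolding v_def eq W_def[symmetric] WI by simp
    have Iu: "(\<integral>\<^sup>+\<xi>. ennreal (u \<xi> powr q) \<partial>lborel) \<le> ennreal I"
    proof -
      have hm: "(\<lambda>\<xi>. ennreal (w \<xi> powr (- (P * q)))) \<in> borel_measurable borel" by measurable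
      have "(\<integral>\<^sup>+\<xi>. ennreal (u \<xi> powr q) \<partial>lborel) = (\<integral>\<^sup>+\<xi>. ennreal (w (- \<theta> + \<xi>) powr (- (P * q))) \<partial>lborel)"
        unfolding u_def eq by (simp add: algebra_simps)
      also have "\<dots> = W" unfolding W_def by (rule nn_integral_translate[OF hm])
      finally show ?thesis using WI by simp
    qed
    have L: "Lq_norm q ?F \<le> ennreal (G * L0)"
      unfolding L0_def by (rule Lq_le[OF _ G0 pw u0 v0 mu mv Iu Iv I0]) (use q1 in simp)
    have "G * L0 = (K * L0 * 2 powr (s/2)) * (min (norm \<theta>) 1 * (1 + (norm \<theta>)\<^sup>2) powr (s/2))"
    proof -
      have "(2 * (1 + (norm \<theta>)\<^sup>2)) powr (s/2) = 2 powr (s/2) * (1 + (norm \<theta>)\<^sup>2) powr (s/2)"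
        by (rule powr_mult)
      then show ?thesis unfolding G_def by (simp only: ac_simps)
    qed
    also have "\<dots> \<le> (K * L0 * 2 powr (s/2)) * (c * ?RHS)"
      using cineq[of \<theta>] K0 L00 by (intro mult_left_mono) (auto simp: a_def)
    also have "\<dots> = (K * L0 * 2 powr (s/2) * c) * ?RHS" by simp
    also have "\<dots> \<le> C * ?RHS" using CK by (intro mult_right_mono) auto
    finally have "G * L0 \<le> C * ?RHS" .
    then show "Lq_norm q ?F \<le> ennreal (C * ?RHS)"
      using L by (meson ennreal_leI order_trans)
  qed
qed

end
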